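(* Let $\mathbf n\ge 2$ and let $A,B,C\cong\mathbb C^{\mathbf n^2}$ have bases $\{x^i_j\},\{y^j_k\},\{z^k_i\}$ ($1\le i,j,k\le\mathbf n$). Let $M_{\langle\mathbf n\rangle}=\sum_{i,j,k=1}^{\mathbf n}x^i_j\otimes y^j_k\otimes z^k_i$ and let $$M^{red}_{\langle\mathbf n\rangle}=M_{\langle\mathbf n\rangle}-\sum_{j=1}^{\mathbf n}x^1_{\mathbf n}\otimes y^{\mathbf n}_j\otimes z^j_1.$$ Then $\underline{\mathbf R}(M_{\langle\mathbf n\rangle})\ge\underline{\mathbf R}(M^{red}_{\langle\mathbf n\rangle})+1$.
   Context: The border rank $\underline{\mathbf R}(T)$ of a tensor $T$ is the smallest $r$ such that $T$ is a limit of sums of $r$ rank one tensors $a\otimes b\otimes c$. $M_{\langle\mathbf n\rangle}$ is the $\mathbf n\times\mathbf n$ matrix multiplication tensor. *)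

theory Defs
  imports Complex_Main
begin

text \<open>A tensor in A \<otimes> B \<otimes> C, where A, B, C have bases indexed by finite sets
  IA, IB, IC, is represented by its coordinate function; only values on
  IA \<times> IB \<times> IC are meaningful.\<close>

definition basis_vec :: "'a \<Rightarrow> 'a \<Rightarrow> complex" where
  "basis_vec p = (\<lambda>q. if q = p then 1 else 0)"

definition rank_one :: "('a \<Rightarrow> complex) \<Rightarrow> ('b \<Rightarrow> complex) \<Rightarrow> ('c \<Rightarrow> complex)
    \<Rightarrow> 'a \<Rightarrow> 'b \<Rightarrow> 'c \<Rightarrow> complex" where
  "rank_one a b c = (\<lambda>x y z. a x * b y * c z)"

text \<open>T is a limit (coordinatewise, equivalently in the Euclidean topology of the
  finite-dimensional tensor space) of sums of r rank one tensors.\<close>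
definition border_rank_le :: "'a set \<Rightarrow> 'b set \<Rightarrow> 'c set \<Rightarrow> ('a \<Rightarrow> 'b \<Rightarrow> 'c \<Rightarrow> complex) \<Rightarrow> nat \<Rightarrow> bool" where
  "border_rank_le IA IB IC T r \<longleftrightarrow>
     (\<exists>a b c. \<forall>x\<in>IA. \<forall>y\<in>IB. \<forall>z\<in>IC.
        (\<lambda>m::nat. \<Sum>l<r. rank_one (a m l) (b m l) (c m l) x y z) \<longlonglongrightarrow> T x y z)"

definition border_rank :: "'a set \<Rightarrow> 'b set \<Rightarrow> 'c set \<Rightarrow> ('a \<Rightarrow> 'b \<Rightarrow> 'c \<Rightarrow> complex) \<Rightarrow> nat" where
  "border_rank IA IB IC T = (LEAST r. border_rank_le IA IB IC T r)"

definition mat_idx :: "nat \<Rightarrow> (nat \<times> nat) set" where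
  "mat_idx n = {1..n} \<times> {1..n}"

definition matmul_tensor :: "nat \<Rightarrow> nat \<times> nat \<Rightarrow> nat \<times> nat \<Rightarrow> nat \<times> nat \<Rightarrow> complex" where
  "matmul_tensor n = (\<lambda>x y z. \<Sum>i\<in>{1..n}. \<Sum>j\<in>{1..n}. \<Sum>k\<in>{1..n}.
      rank_one (basis_vec (i,j)) (basis_vec (j,k)) (basis_vec (k,i)) x y z)"

definition matmul_red :: "nat \<Rightarrow> nat \<times> nat \<Rightarrow> nat \<times> nat \<Rightarrow> nat \<times> nat \<Rightarrow> complex" where
  "matmul_red n = (\<lambda>x y z. matmul_tensor n x y z
      - (\<Sum>j\<in>{1..n}. rank_one (basis_vec (1,n)) (basis_vec (n,j)) (basis_vec (j,1)) x y z))"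

end

theory Submission
  imports Defs
begin
lemma sum_collapse:
  assumes "a \<in> S" "finite S"
  shows "(\<Sum>k\<in>S. if k = a \<and> P k then (1::complex) else 0) = (if P a then 1 else 0)"
proof -
  have "(\<Sum>k\<in>S. if k = a \<and> P k then (1::complex) else 0) = (\<Sum>k\<in>S. if k = a then (if P a then 1 else 0) else 0)"
    by (rule sum.cong) auto
  also have "\<dots> = (if P a then 1 else 0)" using assms by simp
  finally show ?thesis .
qed

lemma M_eq:
  assumes "x \<in> mat_idx n" "y \<in> mat_idx n" "z \<in> mat_idx n"
  shows "matmul_tensor n x y z = (if snd x = fst y \<and> snd y = fst z \<and> snd z = fst x then 1 else 0)"
proof -
  obtain x1 x2 y1 y2 z1 z2 where xyz: "x = (x1,x2)" "y=(y1,y2)" "z=(z1,z2)" by (meson prod.exhaust)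
  have r: "x1 \<in> {1..n}" "x2 \<in> {1..n}" "y1 \<in> {1..n}" "y2 \<in> {1..n}" "z1 \<in> {1..n}" "z2 \<in> {1..n}"
    using assms xyz by (auto simp: mat_idx_def)
  have "matmul_tensor n x y z = (\<Sum>i\<in>{1..n}. \<Sum>j\<in>{1..n}. \<Sum>k\<in>{1..n}.
      (if k = y2 then if j = x2 then if i = z2 then (if i = x1 \<and> j = y1 \<and> k = z1 then 1 else 0) else 0 else 0 else 0))"
    unfolding matmul_tensor_def rank_one_def basis_vec_def xyz
    by (intro sum.cong refl) auto
  also have "\<dots> = (if x2 = y1 \<and> y2 = z1 \<and> z2 = x1 then 1 else 0)"
    using r by (simp add: sum.delta)
  finally show ?thesis using xyz by simp
qed

lemma one_n_in: "n \<ge> 1 \<Longrightarrow> (1, n) \<in> mat_idx n"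
  by (simp add: mat_idx_def)

lemma Mred_eq:
  assumes "x \<in> mat_idx n" "y \<in> mat_idx n" "z \<in> mat_idx n" "n \<ge> 1"
  shows "matmul_red n x y z = matmul_tensor n x y z - (if x = (1,n) then matmul_tensor n (1,n) y z else 0)"
proof -
  obtain y1 y2 z1 z2 where yz: "y=(y1,y2)" "z=(z1,z2)" by (meson prod.exhaust)
  have r: "y1 \<in> {1..n}" "y2 \<in> {1..n}" "z1 \<in> {1..n}" "z2 \<in> {1..n}"
    using assms yz by (auto simp: mat_idx_def)
  have "(\<Sum>j\<in>{1..n}. rank_one (basis_vec (1,n)) (basis_vec (n,j)) (basis_vec (j,1)) x y z)
     = (\<Sum>j\<in>{1..n}. if j = y2 then (if x = (1,n) \<and> y1 = n \<and> z1 = j \<and> z2 = 1 then 1 else 0) else 0)"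
    unfolding rank_one_def basis_vec_def yz by (intro sum.cong refl) auto
  also have "\<dots> = (if x = (1,n) then matmul_tensor n (1,n) y z else 0)"
    using r M_eq[OF one_n_in[OF assms(4)] assms(2,3)] yz by auto
  finally show ?thesis unfolding matmul_red_def by simp
qed

lemma approx_imp_br:
  assumes "\<forall>e>0. \<exists>a b c. \<forall>x\<in>IA. \<forall>y\<in>IB. \<forall>z\<in>IC.
      cmod ((\<Sum>l<s. rank_one (a l) (b l) (c l) x y z) - T x y z) < e"
  shows "border_rank_le IA IB IC T s"
proof -
  define P where "P = (\<lambda>(m::nat) (abc :: (nat \<Rightarrow> 'a \<Rightarrow> complex) \<times> (nat \<Rightarrow> 'b \<Rightarrow> complex) \<times> (nat \<Rightarrow> 'c \<Rightarrow> complex)).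
      \<forall>x\<in>IA. \<forall>y\<in>IB. \<forall>z\<in>IC.
      cmod ((\<Sum>l<s. rank_one (fst abc l) (fst (snd abc) l) (snd (snd abc) l) x y z) - T x y z) < 1 / real (Suc m))"
  have "\<forall>m. \<exists>abc. P m abc"
  proof
    fix m :: nat
    have "(0::real) < 1 / real (Suc m)" by simp
    then obtain a b c where "\<forall>x\<in>IA. \<forall>y\<in>IB. \<forall>z\<in>IC.
      cmod ((\<Sum>l<s. rank_one (a l) (b l) (c l) x y z) - T x y z) < 1 / real (Suc m)"
      using assms by blast
    then have "P m (a, b, c)" unfolding P_def by simp
    then show "\<exists>abc. P m abc" by blast
  qed
  then obtain F where F: "\<And>m. P m (F m)" by metis
  define a where "a = (\<lambda>m. fst (F m))"
  define b where "b = (\<lambda>m. fst (snd (F m)))"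
  define c where "c = (\<lambda>m. snd (snd (F m)))"
  have abc: "\<And>m. \<forall>x\<in>IA. \<forall>y\<in>IB. \<forall>z\<in>IC.
      cmod ((\<Sum>l<s. rank_one (a m l) (b m l) (c m l) x y z) - T x y z) < 1 / real (Suc m)"
    using F unfolding P_def a_def b_def c_def by (simp add: case_prod_beta)
  show ?thesis unfolding border_rank_le_def
  proof (intro exI ballI)
    fix x y z assume xyz: "x \<in> IA" "y \<in> IB" "z \<in> IC"
    show "(\<lambda>m. \<Sum>l<s. rank_one (a m l) (b m l) (c m l) x y z) \<longlonglongrightarrow> T x y z"
    proof (rule LIMSEQ_I)
      fix e :: real assume "0 < e"
      then obtain N where N: "inverse (real (Suc N)) < e" using reals_Archimedean by blast
      show "\<exists>no. \<forall>m\<ge>no. norm ((\<Sum>l<s. rank_one (a m l) (b m l) (c m l) x y z) - T x y z) < e"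
      proof (intro exI allI impI)
        fix m assume "N \<le> m"
        then have "1 / real (Suc m) \<le> inverse (real (Suc N))"
          by (simp add: divide_inverse le_imp_inverse_le)
        with abc[of m] xyz N show "norm ((\<Sum>l<s. rank_one (a m l) (b m l) (c m l) x y z) - T x y z) < e"
          by fastforce
      qed
    qed
  qed
qed

lemma exists_decomp:
  assumes "finite IA" "finite IB" "finite IC"
  shows "\<exists>s. border_rank_le IA IB IC T s"
proof -
  let ?S = "IA \<times> IB \<times> IC"
  have fin: "finite ?S" using assms by simp
  obtain f where f: "bij_betw f {..<card ?S} ?S" using ex_bij_betw_nat_finite[OF fin] by (metis atLeast0LessThan)
  define g where "g = (\<lambda>p x y z. rank_one (\<lambda>x'. T (fst p) (fst (snd p)) (snd (snd p)) * basis_vec (fst p) x')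
       (basis_vec (fst (snd p))) (basis_vec (snd (snd p))) x y z)"
  have "\<forall>x\<in>IA. \<forall>y\<in>IB. \<forall>z\<in>IC. (\<Sum>l<card ?S. g (f l) x y z) = T x y z"
  proof (intro ballI)
    fix x y z assume xyz: "x \<in> IA" "y \<in> IB" "z \<in> IC"
    have "(\<Sum>l<card ?S. g (f l) x y z) = (\<Sum>p\<in>?S. g p x y z)"
      using sum.reindex_bij_betw[OF f, of "\<lambda>p. g p x y z"] by simp
    also have "\<dots> = (\<Sum>p\<in>?S. if p = (x,y,z) then T x y z else 0)"
      by (intro sum.cong refl) (auto simp: g_def rank_one_def basis_vec_def)
    also have "\<dots> = T x y z" using fin xyz by simp
    finally show "(\<Sum>l<card ?S. g (f l) x y z) = T x y z" .
  qed
  then have "border_rank_le IA IB IC T (card ?S)"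
    unfolding border_rank_le_def g_def
    by (intro exI[of _ "\<lambda>m l x'. T (fst (f l)) (fst (snd (f l))) (snd (snd (f l))) * basis_vec (fst (f l)) x'"]
        exI[of _ "\<lambda>m l. basis_vec (fst (snd (f l)))"] exI[of _ "\<lambda>m l. basis_vec (snd (snd (f l)))"]) simp
  then show ?thesis by blast
qed

lemma r_pos:
  assumes "n \<ge> 1" "border_rank_le (mat_idx n) (mat_idx n) (mat_idx n) (matmul_tensor n) r"
  shows "r \<ge> 1"
proof (rule ccontr)
  assume "\<not> r \<ge> 1" then have r0: "r = 0" by simp
  have o: "(1,1) \<in> mat_idx n" using assms by (simp add: mat_idx_def)
  from assms(2) obtain a b c where "\<forall>x\<in>mat_idx n. \<forall>y\<in>mat_idx n. \<forall>z\<in>mat_idx n.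
        (\<lambda>m::nat. \<Sum>l<r. rank_one (a m l) (b m l) (c m l) x y z) \<longlonglongrightarrow> matmul_tensor n x y z"
    unfolding border_rank_le_def by blast
  then have "(\<lambda>m::nat. 0::complex) \<longlonglongrightarrow> matmul_tensor n (1,1) (1,1) (1,1)" using o r0 by auto
  moreover have "matmul_tensor n (1,1) (1,1) (1,1) = 1" using M_eq[OF o o o] by simp
  ultimately show False using LIMSEQ_unique[OF tendsto_const] by fastforce
qed


definition sw :: "nat \<Rightarrow> nat \<Rightarrow> nat \<Rightarrow> nat" where
  "sw a b i = (if i = a then b else if i = b then a else i)"

lemma sw_in: "a \<in> S \<Longrightarrow> b \<in> S \<Longrightarrow> i \<in> S \<Longrightarrow> sw a b i \<in> S"
  by (simp add: sw_def)

lemma sw_inj[simp]: "sw a b i = sw a b j \<longleftrightarrow> i = j"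
  by (auto simp: sw_def)

lemma sw_a[simp]: "sw a b a = b" by (simp add: sw_def)

definition ar :: "real \<Rightarrow> nat \<Rightarrow> nat \<times> nat \<Rightarrow> real" where
  "ar t n x = (if fst x \<noteq> 1 then t else 1) / (if snd x = n then t else 1)"
definition brr :: "real \<Rightarrow> nat \<Rightarrow> nat \<times> nat \<Rightarrow> real" where
  "brr t n y = (if fst y = n then t else 1)"
definition crr :: "real \<Rightarrow> nat \<times> nat \<Rightarrow> real" where
  "crr t z = 1 / (if snd z \<noteq> 1 then t else 1)"

lemma w_C1:
  assumes "t > 0" "snd x = fst y" "snd y = fst z" "snd z = fst x"
  shows "ar t n x * brr t n y * crr t z = 1"
  using assms by (auto simp: ar_def brr_def crr_def)

lemma w_C2:
  assumes "t > 0" "fst y = n" "snd z = 1"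
  shows "ar t n x * brr t n y * crr t z = ar t n x * t"
  using assms by (auto simp: ar_def brr_def crr_def)

lemma ar_le1: "t > 0 \<Longrightarrow> t \<le> 1 \<Longrightarrow> x \<noteq> (1, n) \<Longrightarrow> ar t n x \<le> 1"
  by (cases x) (auto simp: ar_def)

lemma w_bound:
  assumes "t > 0" "t \<le> 1"
  shows "0 \<le> ar t n x * brr t n y * crr t z" "ar t n x * brr t n y * crr t z \<le> 1 / t^2"
proof -
  have a: "0 \<le> ar t n x" "ar t n x \<le> 1/t" using assms by (auto simp: ar_def field_simps mult_le_one)
  have b: "0 \<le> brr t n y" "brr t n y \<le> 1" using assms by (auto simp: brr_def)
  have c: "0 \<le> crr t z" "crr t z \<le> 1/t" using assms by (auto simp: crr_def field_simps)
  show "0 \<le> ar t n x * brr t n y * crr t z" using a b c by simp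
  have "ar t n x * brr t n y * crr t z \<le> (1/t) * 1 * (1/t)"
    using a b c assms by (intro mult_mono) auto
  then show "ar t n x * brr t n y * crr t z \<le> 1 / t^2" by (simp add: power2_eq_square)
qed


lemma approx_red:
  assumes n2: "n \<ge> 2"
    and brM: "border_rank_le (mat_idx n) (mat_idx n) (mat_idx n) (matmul_tensor n) r"
    and e: "\<epsilon> > 0"
  shows "\<exists>a b c. \<forall>x\<in>mat_idx n. \<forall>y\<in>mat_idx n. \<forall>z\<in>mat_idx n.
     cmod ((\<Sum>l<r-1. rank_one (a l) (b l) (c l) x y z) - matmul_red n x y z) < \<epsilon>"
proof -
  let ?I = "mat_idx n"
  let ?M = "matmul_tensor n"
  have n1: "n \<ge> 1" using n2 by simp
  have r1: "r \<ge> 1" using r_pos[OF n1 brM] .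
  have finI: "finite ?I" by (simp add: mat_idx_def)
  obtain a b c where conv: "\<forall>x\<in>?I. \<forall>y\<in>?I. \<forall>z\<in>?I.
        (\<lambda>m::nat. \<Sum>l<r. rank_one (a m l) (b m l) (c m l) x y z) \<longlonglongrightarrow> ?M x y z"
    using brM unfolding border_rank_le_def by blast
  define t where "t = min 1 (\<epsilon>/2)"
  have t0: "t > 0" and t1: "t \<le> 1" and te: "t \<le> \<epsilon>/2" using e by (auto simp: t_def)
  define \<delta> where "\<delta> = \<epsilon> * t^2 / 4"
  have d0: "\<delta> > 0" using e t0 by (simp add: \<delta>_def)
  have "eventually (\<lambda>m. \<forall>p\<in>?I \<times> ?I \<times> ?I.
      cmod ((\<Sum>l<r. rank_one (a m l) (b m l) (c m l) (fst p) (fst (snd p)) (snd (snd p)))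
             - ?M (fst p) (fst (snd p)) (snd (snd p))) < \<delta>) sequentially"
  proof (rule eventually_ball_finite)
    show "finite (?I \<times> ?I \<times> ?I)" using finI by simp
    show "\<forall>p\<in>?I \<times> ?I \<times> ?I. eventually (\<lambda>m. cmod ((\<Sum>l<r. rank_one (a m l) (b m l) (c m l) (fst p) (fst (snd p)) (snd (snd p)))
             - ?M (fst p) (fst (snd p)) (snd (snd p))) < \<delta>) sequentially"
    proof
      fix p assume "p \<in> ?I \<times> ?I \<times> ?I"
      then have "(\<lambda>m::nat. \<Sum>l<r. rank_one (a m l) (b m l) (c m l) (fst p) (fst (snd p)) (snd (snd p)))
          \<longlonglongrightarrow> ?M (fst p) (fst (snd p)) (snd (snd p))" using conv by auto
      from tendstoD[OF this d0] show "eventually (\<lambda>m. cmod ((\<Sum>l<r. rank_one (a m l) (b m l) (c m l) (fst p) (fst (snd p)) (snd (snd p)))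
             - ?M (fst p) (fst (snd p)) (snd (snd p))) < \<delta>) sequentially"
        by (simp add: dist_norm)
    qed
  qed
  then obtain m where mclose: "\<forall>p\<in>?I \<times> ?I \<times> ?I.
      cmod ((\<Sum>l<r. rank_one (a m l) (b m l) (c m l) (fst p) (fst (snd p)) (snd (snd p)))
             - ?M (fst p) (fst (snd p)) (snd (snd p))) < \<delta>"
  proof -
    from \<open>eventually _ sequentially\<close> obtain N where N: "\<forall>m'\<ge>N. \<forall>p\<in>?I \<times> ?I \<times> ?I.
      cmod ((\<Sum>l<r. rank_one (a m' l) (b m' l) (c m' l) (fst p) (fst (snd p)) (snd (snd p)))
             - ?M (fst p) (fst (snd p)) (snd (snd p))) < \<delta>"
      unfolding eventually_sequentially by blast
    have "N \<ge> N" by simp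
    with N have "\<forall>p\<in>?I \<times> ?I \<times> ?I.
      cmod ((\<Sum>l<r. rank_one (a N l) (b N l) (c N l) (fst p) (fst (snd p)) (snd (snd p)))
             - ?M (fst p) (fst (snd p)) (snd (snd p))) < \<delta>" by blast
    then show ?thesis by (rule that)
  qed
  define T where "T = (\<lambda>x y z. \<Sum>l<r. a m l x * b m l y * c m l z)"
  have close: "\<And>x y z. x \<in> ?I \<Longrightarrow> y \<in> ?I \<Longrightarrow> z \<in> ?I \<Longrightarrow> cmod (T x y z - ?M x y z) < \<delta>"
  proof -
    fix x y z assume "x \<in> ?I" "y \<in> ?I" "z \<in> ?I"
    then have "(x,y,z) \<in> ?I \<times> ?I \<times> ?I" by simp
    from mclose[rule_format, OF this] show "cmod (T x y z - ?M x y z) < \<delta>"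
      by (simp add: T_def rank_one_def)
  qed
  define u where "u = a m 0"
  have Ine: "?I \<noteq> {}" using n1 by (auto simp: mat_idx_def)
  define mx where "mx = Max ((\<lambda>q. cmod (u q)) ` ?I)"
  have "mx \<in> (\<lambda>q. cmod (u q)) ` ?I" unfolding mx_def using finI Ine by (intro Max_in) auto
  then obtain q0 where q0: "q0 \<in> ?I" "cmod (u q0) = mx" by auto
  obtain i0 j0 where ij0: "q0 = (i0, j0)" by (cases q0)
  have i0: "i0 \<in> {1..n}" and j0: "j0 \<in> {1..n}" using q0 ij0 by (auto simp: mat_idx_def)
  have umax: "\<And>q. q \<in> ?I \<Longrightarrow> cmod (u q) \<le> cmod (u (i0, j0))"
    using q0 ij0 finI unfolding mx_def by auto
  define p where "p = sw 1 i0"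
  define q where "q = sw n j0"
  have p_in: "\<And>i. i \<in> {1..n} \<Longrightarrow> p i \<in> {1..n}" unfolding p_def using i0 n1 by (intro sw_in) auto
  have q_in: "\<And>i. i \<in> {1..n} \<Longrightarrow> q i \<in> {1..n}" unfolding q_def using j0 n1 by (intro sw_in) auto
  define sA where "sA = (\<lambda>x::nat\<times>nat. (p (fst x), q (snd x)))"
  define sB where "sB = (\<lambda>y::nat\<times>nat. (q (fst y), snd y))"
  define sC where "sC = (\<lambda>z::nat\<times>nat. (fst z, p (snd z)))"
  have sA_in: "\<And>x. x \<in> ?I \<Longrightarrow> sA x \<in> ?I" using p_in q_in by (auto simp: sA_def mat_idx_def)
  have sB_in: "\<And>x. x \<in> ?I \<Longrightarrow> sB x \<in> ?I" using p_in q_in by (auto simp: sB_def mat_idx_def)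
  have sC_in: "\<And>x. x \<in> ?I \<Longrightarrow> sC x \<in> ?I" using p_in q_in by (auto simp: sC_def mat_idx_def)
  have sA1n: "sA (1, n) = (i0, j0)" by (simp add: sA_def p_def q_def)
  have inv: "\<And>x y z. x \<in> ?I \<Longrightarrow> y \<in> ?I \<Longrightarrow> z \<in> ?I \<Longrightarrow> ?M (sA x) (sB y) (sC z) = ?M x y z"
  proof -
    fix x y z assume xyz: "x \<in> ?I" "y \<in> ?I" "z \<in> ?I"
    show "?M (sA x) (sB y) (sC z) = ?M x y z"
      using M_eq[OF sA_in[OF xyz(1)] sB_in[OF xyz(2)] sC_in[OF xyz(3)]] M_eq[OF xyz]
      by (simp add: sA_def sB_def sC_def p_def q_def)
  qed
  have I1n: "(1, n) \<in> ?I" using one_n_in[OF n1] .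
  define c0 where "c0 = u (i0, j0)"
  define v where "v = (\<lambda>x. if c0 = 0 then (if x = (1,n) then 1 else 0) else u (sA x) / c0)"
  have v1n: "v (1, n) = 1" using sA1n by (simp add: v_def c0_def)
  have vle: "\<And>x. x \<in> ?I \<Longrightarrow> cmod (v x) \<le> 1"
  proof -
    fix x assume "x \<in> ?I"
    then have "cmod (u (sA x)) \<le> cmod c0" using umax sA_in c0_def by auto
    then show "cmod (v x) \<le> 1" by (auto simp: v_def norm_divide divide_le_eq_1)
  qed
  define \<alpha> where "\<alpha> = (\<lambda>x. complex_of_real (ar t n x))"
  define \<beta> where "\<beta> = (\<lambda>y. complex_of_real (brr t n y))"
  define \<gamma> where "\<gamma> = (\<lambda>z. complex_of_real (crr t z))"
  define A where "A = (\<lambda>l x. \<alpha> x * (a m l (sA x) - a m l (i0, j0) * v x))"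
  define B where "B = (\<lambda>l y. \<beta> y * b m l (sB y))"
  define C where "C = (\<lambda>l z. \<gamma> z * c m l (sC z))"
  have A0: "\<And>x. x \<in> ?I \<Longrightarrow> A 0 x = 0"
  proof -
    fix x assume xI: "x \<in> ?I"
    show "A 0 x = 0"
    proof (cases "c0 = 0")
      case True
      then have "u (sA x) = 0" using umax[OF sA_in[OF xI]] c0_def by simp
      then show ?thesis using True by (simp add: A_def u_def c0_def)
    next
      case False
      then show ?thesis by (simp add: A_def v_def u_def c0_def)
    qed
  qed
  show ?thesis
  proof (intro exI ballI)
    fix x y z assume xI: "x \<in> ?I" and yI: "y \<in> ?I" and zI: "z \<in> ?I"
    define W where "W = ar t n x * brr t n y * crr t z"
    have W_eq: "\<alpha> x * \<beta> y * \<gamma> z = complex_of_real W" by (simp add: W_def \<alpha>_def \<beta>_def \<gamma>_def)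
    define S where "S = (\<Sum>l<r-1. rank_one (A (Suc l)) (B (Suc l)) (C (Suc l)) x y z)"
    have "S = (\<Sum>l<r. A l x * B l y * C l z)"
    proof -
      have rr: "r = Suc (r - 1)" using r1 by simp
      have "(\<Sum>l<r. A l x * B l y * C l z) = (\<Sum>l<Suc (r-1). A l x * B l y * C l z)" using rr by simp
      also have "\<dots> = A 0 x * B 0 y * C 0 z + (\<Sum>l<r-1. A (Suc l) x * B (Suc l) y * C (Suc l) z)"
        by (rule sum.lessThan_Suc_shift)
      finally show ?thesis using A0[OF xI] by (simp add: S_def rank_one_def)
    qed
    also have "\<dots> = (\<Sum>l<r. complex_of_real W * (a m l (sA x) * b m l (sB y) * c m l (sC z))
                      - (complex_of_real W * v x) * (a m l (i0, j0) * b m l (sB y) * c m l (sC z)))"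
      by (intro sum.cong refl) (simp add: A_def B_def C_def W_eq[symmetric] algebra_simps)
    also have "\<dots> = complex_of_real W * T (sA x) (sB y) (sC z) - (complex_of_real W * v x) * T (i0, j0) (sB y) (sC z)"
      by (simp add: sum_subtractf sum_distrib_left T_def)
    finally have S_eq: "S = complex_of_real W * (T (sA x) (sB y) (sC z) - v x * T (i0, j0) (sB y) (sC z))"
      by (simp add: algebra_simps)
    define K where "K = complex_of_real W * (?M x y z - v x * ?M (1, n) y z)"
    have K_eq: "K = complex_of_real W * (?M (sA x) (sB y) (sC z) - v x * ?M (i0, j0) (sB y) (sC z))"
      using inv[OF xI yI zI] inv[OF I1n yI zI] sA1n K_def by simp
    have Wb: "0 \<le> W" "W \<le> 1 / t^2" using w_bound[OF t0 t1] W_def by auto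
    have e1: "cmod (T (sA x) (sB y) (sC z) - ?M (sA x) (sB y) (sC z)) < \<delta>"
      using close[OF sA_in[OF xI] sB_in[OF yI] sC_in[OF zI]] .
    have e2: "cmod (T (i0, j0) (sB y) (sC z) - ?M (i0, j0) (sB y) (sC z)) < \<delta>"
      using close[OF _ sB_in[OF yI] sC_in[OF zI]] q0 ij0 by simp
    have SK: "cmod (S - K) < \<epsilon> / 2"
    proof -
      have "S - K = complex_of_real W * ((T (sA x) (sB y) (sC z) - ?M (sA x) (sB y) (sC z))
                 - v x * (T (i0, j0) (sB y) (sC z) - ?M (i0, j0) (sB y) (sC z)))"
        unfolding S_eq K_eq by (simp add: algebra_simps)
      then have "cmod (S - K) = W * cmod ((T (sA x) (sB y) (sC z) - ?M (sA x) (sB y) (sC z))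
                 - v x * (T (i0, j0) (sB y) (sC z) - ?M (i0, j0) (sB y) (sC z)))"
        using Wb by (simp add: norm_mult)
      also have "\<dots> \<le> W * (cmod (T (sA x) (sB y) (sC z) - ?M (sA x) (sB y) (sC z))
                 + cmod (v x) * cmod (T (i0, j0) (sB y) (sC z) - ?M (i0, j0) (sB y) (sC z)))"
        using Wb by (intro mult_left_mono) (auto intro: order_trans[OF norm_triangle_ineq4] simp: norm_mult)
      also have "\<dots> \<le> (1/t^2) * (cmod (T (sA x) (sB y) (sC z) - ?M (sA x) (sB y) (sC z))
                 + cmod (v x) * cmod (T (i0, j0) (sB y) (sC z) - ?M (i0, j0) (sB y) (sC z)))"
        using Wb by (intro mult_right_mono) auto
      also have "\<dots> < (1/t^2) * (\<delta> + 1 * \<delta>)"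
      proof (rule mult_strict_left_mono)
        have "cmod (v x) * cmod (T (i0, j0) (sB y) (sC z) - ?M (i0, j0) (sB y) (sC z)) \<le> 1 * \<delta>"
          using vle[OF xI] e2 by (intro mult_mono) auto
        then show "cmod (T (sA x) (sB y) (sC z) - ?M (sA x) (sB y) (sC z))
                 + cmod (v x) * cmod (T (i0, j0) (sB y) (sC z) - ?M (i0, j0) (sB y) (sC z)) < \<delta> + 1 * \<delta>"
          using e1 by linarith
        show "0 < 1 / t^2" using t0 by simp
      qed
      also have "\<dots> = \<epsilon> / 2" using t0 by (simp add: \<delta>_def field_simps)
      finally show ?thesis .
    qed
    have KR: "cmod (K - matmul_red n x y z) \<le> t"
    proof -
      have R: "matmul_red n x y z = ?M x y z - (if x = (1,n) then ?M (1,n) y z else 0)"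
        using Mred_eq[OF xI yI zI n1] .
      have M1: "?M x y z = (if snd x = fst y \<and> snd y = fst z \<and> snd z = fst x then 1 else 0)"
        using M_eq[OF xI yI zI] .
      have M2: "?M (1, n) y z = (if n = fst y \<and> snd y = fst z \<and> snd z = 1 then 1 else 0)"
        using M_eq[OF I1n yI zI] by simp
      show ?thesis
      proof (cases "snd x = fst y \<and> snd y = fst z \<and> snd z = fst x")
        case C1: True
        have W1: "W = 1" using w_C1[OF t0] C1 W_def by auto
        show ?thesis
        proof (cases "n = fst y \<and> snd y = fst z \<and> snd z = 1")
          case True
          then have "x = (1, n)" using C1 by (cases x) auto
          then show ?thesis using True C1 W1 K_def R M1 M2 v1n t0 by simp
        next
          case nC2: False
          then have "x \<noteq> (1, n)" using C1 by (cases x) auto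
          then show ?thesis using nC2 C1 W1 K_def R M1 M2 t0 by auto
        qed
      next
        case nC1: False
        show ?thesis
        proof (cases "n = fst y \<and> snd y = fst z \<and> snd z = 1")
          case C2: True
          have xne: "x \<noteq> (1, n)" using nC1 C2 by auto
          have W2: "W = ar t n x * t" using w_C2[OF t0] C2 W_def by auto
          have "ar t n x \<le> 1" using ar_le1[OF t0 t1 xne] .
          moreover have "0 \<le> ar t n x" using t0 by (auto simp: ar_def)
          ultimately have Wt: "W \<le> t" "0 \<le> W" using W2 t0 by (auto simp: mult_le_cancel_right1)
          have m1: "?M x y z = 0" using M1 nC1 by auto
          have m2: "?M (1,n) y z = 1" using M2 C2 by auto
          have "matmul_red n x y z = 0" using R m1 xne by simp
          then have "K - matmul_red n x y z = - (complex_of_real W * v x)"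
            using K_def m1 m2 by simp
          then have "cmod (K - matmul_red n x y z) = W * cmod (v x)" using Wt by (simp add: norm_mult)
          also have "\<dots> \<le> t * 1" using Wt vle[OF xI] by (intro mult_mono) auto
          finally show ?thesis by simp
        next
          case nC2: False
          have m1: "?M x y z = 0" using M1 nC1 by auto
          have m2: "?M (1,n) y z = 0" using M2 nC2 by auto
          have "matmul_red n x y z = 0" using R m1 m2 by simp
          moreover have "K = 0" using K_def m1 m2 by simp
          ultimately show ?thesis using t0 by simp
        qed
      qed
    qed
    have "cmod (S - matmul_red n x y z) \<le> cmod (S - K) + cmod (K - matmul_red n x y z)"
      using norm_triangle_ineq[of "S - K" "K - matmul_red n x y z"] by simp
    also have "\<dots> < \<epsilon>" using SK KR te by linarith
    finally show "cmod ((\<Sum>l<r-1. rank_one (A (Suc l)) (B (Suc l)) (C (Suc l)) x y z) - matmul_red n x y z) < \<epsilon>"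
      by (simp add: S_def)
  qed
qed


theorem corollary5p3:
  fixes n :: nat
  assumes "n \<ge> 2"
  shows "border_rank (mat_idx n) (mat_idx n) (mat_idx n) (matmul_tensor n)
           \<ge> border_rank (mat_idx n) (mat_idx n) (mat_idx n) (matmul_red n) + 1"
proof -
  let ?I = "mat_idx n"
  have finI: "finite ?I" by (simp add: mat_idx_def)
  define r where "r = border_rank ?I ?I ?I (matmul_tensor n)"
  have ex: "\<exists>s. border_rank_le ?I ?I ?I (matmul_tensor n) s" using exists_decomp finI by blast
  have brr: "border_rank_le ?I ?I ?I (matmul_tensor n) r"
    unfolding r_def border_rank_def using LeastI_ex[OF ex] .
  have r1: "r \<ge> 1" using r_pos[OF _ brr] assms by simp
  have "border_rank_le ?I ?I ?I (matmul_red n) (r - 1)"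
    by (rule approx_imp_br) (use approx_red[OF assms brr] in blast)
  then have "border_rank ?I ?I ?I (matmul_red n) \<le> r - 1"
    unfolding border_rank_def by (rule Least_le)
  then show ?thesis using r1 unfolding r_def by simp
qed

end
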